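(* Consider the honeycomb lattice with Bravais lattice vectors $\bm a_1,\bm a_2$ and sites $A(\bm R),B(\bm R)$ for $\bm R\in\mathbb Z\bm a_1+\mathbb Z\bm a_2$, with nearest-neighbour bonds $A(\bm R)$–$B(\bm R)$ of type $c$, $A(\bm R)$–$B(\bm R-\bm a_1)$ of type $a$, and $A(\bm R)$–$B(\bm R-\bm a_2)$ of type $b$. Assign to every bond $\langle ij\rangle$ of type $\alpha$ the link matrix $U_{ij}=U_{ji}=U^\alpha$, where $$U^a=\tau^y\otimes I_2,\quad U^b=-\tau^x\otimes\sigma^z,\quad U^c=-\tau^x\otimes\sigma^y,$$ with $\tau^{x,y,z},\sigma^{x,y,z}$ Pauli matrices. Then (i) for every elementary hexagon $p$, the ordered product of the link matrices around $p$ equals $-I_4$; and (ii) for any finite flake $\Lambda$ of this lattice (a finite union of closed hexagonal plaquettes whose cycle space is generated by the hexagon boundaries) admitting a Hamiltonian path, there exist unitary $4\times4$ matrices $g_j$ and signs $\eta_{ij}=\eta_{ji}\in\{+1,-1\}$ such that $g_iU_{ij}g_j^\dagger=\eta_{ij}I_4$ for every bond of $\Lambda$ and $\prod_{\langle ij\rangle\in p}\eta_{ij}=-1$ for every hexagon $p$ of $\Lambda$. Consequently the Hubbard model $$H=-\frac{t}{\sqrt3}\sum_{\langle ij\rangle}\psi_i^\dagger U_{ij}\psi_j+h.c.+\frac U2\sum_j\psi_j^\dagger\psi_j(\psi_j^\dagger\psi_j-1)$$ on $\Lambda$ (with $\psi_j$ four-component fermionic spinors) is unitarily equivalent, via $\psi_j\to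 g_j\psi_j$, to the $\pi$-flux Hubbard model $-\frac{t}{\sqrt3}\sum_{\langle ij\rangle}\eta_{ij}\psi_i^\dagger\psi_j+h.c.+\frac U2\sum_j\psi_j^\dagger\psi_j(\psi_j^\dagger\psi_j-1)$, which has a global $\mathrm{SU}(4)$ symmetry.
   Context: $t,U$ are real. The Pauli matrices $\boldsymbol\tau$ act on the first and $\boldsymbol\sigma$ on the second tensor factor of $\mathbb C^2\otimes\mathbb C^2$. With the given bond assignment, each hexagon's bonds have types $c,a,b,c,a,b$ in cyclic order. This model arises as the $J_{\mathrm{eff}}=3/2$ description of $d^1$ ions (e.g. Zr$^{3+}$ in $\alpha$-ZrCl$_3$) on a honeycomb lattice of edge-sharing octahedra. *)

theory Defs
  imports "Jordan_Normal_Form.Matrix"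
begin

text \<open>A Bravais lattice vector R = n1 a1 + n2 a2 is represented by its integer
coordinates (n1, n2).  Sites are A(R) and B(R).\<close>

datatype site = SA "int \<times> int" | SB "int \<times> int"

datatype bondtype = Ta | Tb | Tc

definition a1 :: "int \<times> int" where "a1 = (1, 0)"
definition a2 :: "int \<times> int" where "a2 = (0, 1)"

definition vadd :: "int \<times> int \<Rightarrow> int \<times> int \<Rightarrow> int \<times> int"
  where "vadd R S = (fst R + fst S, snd R + snd S)"
definition vsub :: "int \<times> int \<Rightarrow> int \<times> int \<Rightarrow> int \<times> int"
  where "vsub R S = (fst R - fst S, snd R - snd S)"

fun bond_type :: "site \<Rightarrow> site \<Rightarrow> bondtype option" where
  "bond_type (SA R) (SB S) =
     (if S = R then Some Tc else if S = vsub R a1 then Some Ta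
      else if S = vsub R a2 then Some Tb else None)"
| "bond_type (SB S) (SA R) =
     (if S = R then Some Tc else if S = vsub R a1 then Some Ta
      else if S = vsub R a2 then Some Tb else None)"
| "bond_type _ _ = None"

definition pauli_x :: "complex mat" where "pauli_x = mat_of_rows_list 2 [[0, 1], [1, 0]]"
definition pauli_y :: "complex mat" where "pauli_y = mat_of_rows_list 2 [[0, - \<i>], [\<i>, 0]]"
definition pauli_z :: "complex mat" where "pauli_z = mat_of_rows_list 2 [[1, 0], [0, -1]]"

text \<open>Kronecker product of two 2x2 matrices (tau acts on the first factor,
  sigma on the second); basis index i = 2*i1 + i2.\<close>
definition kron2 :: "complex mat \<Rightarrow> complex mat \<Rightarrow> complex mat" where
  "kron2 A B = mat 4 4 (\<lambda>(i, j). A $$ (i div 2, j div 2) * B $$ (i mod 2, j mod 2))"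

definition Umat :: "bondtype \<Rightarrow> complex mat" where
  "Umat \<alpha> = (case \<alpha> of
      Ta \<Rightarrow> kron2 pauli_y (1\<^sub>m 2)
    | Tb \<Rightarrow> - kron2 pauli_x pauli_z
    | Tc \<Rightarrow> - kron2 pauli_x pauli_y)"

definition link :: "site \<Rightarrow> site \<Rightarrow> complex mat" where
  "link i j = (case bond_type i j of Some \<alpha> \<Rightarrow> Umat \<alpha> | None \<Rightarrow> 0\<^sub>m 4 4)"

definition dagger :: "complex mat \<Rightarrow> complex mat" where
  "dagger A = mat (dim_col A) (dim_row A) (\<lambda>(i, j). cnj (A $$ (j, i)))"

definition unitary4 :: "complex mat \<Rightarrow> bool" where
  "unitary4 g \<longleftrightarrow> g \<in> carrier_mat 4 4 \<and> g * dagger g = 1\<^sub>m 4 \<and> dagger g * g = 1\<^sub>m 4"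

text \<open>The elementary hexagon labelled by R, as a cyclic list of its six sites:
  A(R) -c- B(R) -a- A(R+a1) -b- B(R+a1-a2) -c- A(R+a1-a2) -a- B(R-a2) -b- A(R).
  Every elementary hexagon of the honeycomb lattice is of this form for a unique R.\<close>
definition hex :: "int \<times> int \<Rightarrow> site list" where
  "hex R = [SA R, SB R, SA (vadd R a1), SB (vsub (vadd R a1) a2),
            SA (vsub (vadd R a1) a2), SB (vsub R a2)]"

definition loop_prod :: "site list \<Rightarrow> complex mat" where
  "loop_prod vs = foldr (\<lambda>k M. link (vs ! k) (vs ! ((k + 1) mod length vs)) * M)
                        [0..<length vs] (1\<^sub>m 4)"

text \<open>Undirected edges are represented as two-element sets of sites.\<close>
definition hex_edges :: "int \<times> int \<Rightarrow> site set set" where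
  "hex_edges R = {{hex R ! k, hex R ! ((k + 1) mod 6)} | k. k < 6}"

definition flake_sites :: "(int \<times> int) set \<Rightarrow> site set" where
  "flake_sites \<Lambda> = (\<Union>R\<in>\<Lambda>. set (hex R))"

definition flake_edges :: "(int \<times> int) set \<Rightarrow> site set set" where
  "flake_edges \<Lambda> = (\<Union>R\<in>\<Lambda>. hex_edges R)"

text \<open>Cycle space (over GF(2)) of the flake graph: edge sets in which every vertex
  has even degree.  Generated by hexagon boundaries: each such edge set is the
  symmetric difference (GF(2)-sum) of the boundaries of some set of hexagons of the flake.\<close>
definition even_subgraph :: "site set set \<Rightarrow> bool" where
  "even_subgraph F \<longleftrightarrow> (\<forall>v. even (card {e \<in> F. v \<in> e}))"

definition gf2_sum_hex :: "(int \<times> int) set \<Rightarrow> site set set" where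
  "gf2_sum_hex S = {e. odd (card {R \<in> S. e \<in> hex_edges R})}"

definition cycle_space_generated_by_hexagons :: "(int \<times> int) set \<Rightarrow> bool" where
  "cycle_space_generated_by_hexagons \<Lambda> \<longleftrightarrow>
     (\<forall>F \<subseteq> flake_edges \<Lambda>. even_subgraph F \<longrightarrow> (\<exists>S \<subseteq> \<Lambda>. F = gf2_sum_hex S))"

definition hamiltonian_path :: "(int \<times> int) set \<Rightarrow> site list \<Rightarrow> bool" where
  "hamiltonian_path \<Lambda> vs \<longleftrightarrow> distinct vs \<and> set vs = flake_sites \<Lambda> \<and>
     (\<forall>k. Suc k < length vs \<longrightarrow> {vs ! k, vs ! Suc k} \<in> flake_edges \<Lambda>)"

end

theory Submission
  imports Defs
begin

definition M :: "complex list list \<Rightarrow> complex mat" where "M xs = mat_of_rows_list 4 xs"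

definition col4 :: "complex list list \<Rightarrow> nat \<Rightarrow> complex list" where
  "col4 ys j = [ys!0!j, ys!1!j, ys!2!j, ys!3!j]"
definition dot4 :: "complex list \<Rightarrow> complex list \<Rightarrow> complex" where
  "dot4 a b = a!0*b!0 + a!1*b!1 + a!2*b!2 + a!3*b!3"
definition mmul :: "complex list list \<Rightarrow> complex list list \<Rightarrow> complex list list" where
  "mmul xs ys = map (\<lambda>r. [dot4 r (col4 ys 0), dot4 r (col4 ys 1), dot4 r (col4 ys 2), dot4 r (col4 ys 3)]) xs"
definition ok4 :: "complex list list \<Rightarrow> bool" where
  "ok4 xs \<longleftrightarrow> length xs = 4 \<and> (\<forall>r\<in>set xs. length r = 4)"

lemma less4: "(i::nat) < 4 \<longleftrightarrow> i = 0 \<or> i = 1 \<or> i = 2 \<or> i = 3" by auto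

lemma M_carrier: "ok4 xs \<Longrightarrow> M xs \<in> carrier_mat 4 4"
  by (simp add: M_def mat_of_rows_list_def ok4_def)

lemma M_index: "ok4 xs \<Longrightarrow> i < 4 \<Longrightarrow> j < 4 \<Longrightarrow> M xs $$ (i,j) = xs!i!j"
  by (simp add: M_def mat_of_rows_list_def ok4_def)

lemma M_mult: assumes "ok4 xs" "ok4 ys" shows "M xs * M ys = M (mmul xs ys)"
proof -
  have o: "ok4 (mmul xs ys)" using assms by (auto simp: ok4_def mmul_def)
  show ?thesis
  proof (rule eq_matI)
    fix i j assume ij: "i < dim_row (M (mmul xs ys))" "j < dim_col (M (mmul xs ys))"
    hence i: "i < 4" and j: "j < 4" using M_carrier[OF o] by auto
    have "(M xs * M ys) $$ (i,j) = (\<Sum>k<4. xs!i!k * ys!k!j)"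
      using i j M_carrier[OF assms(1)] M_carrier[OF assms(2)]
      by (simp add: scalar_prod_def M_index[OF assms(1)] M_index[OF assms(2)] lessThan_atLeast0)
    also have "\<dots> = mmul xs ys ! i ! j"
      using i j assms(1) unfolding ok4_def mmul_def dot4_def col4_def less4
      by (auto simp: numeral_eq_Suc lessThan_Suc)
    finally show "(M xs * M ys) $$ (i,j) = M (mmul xs ys) $$ (i,j)" using M_index[OF o i j] by simp
  qed (use M_carrier[OF o] M_carrier[OF assms(1)] M_carrier[OF assms(2)] in auto)
qed

definition ctr :: "complex list list \<Rightarrow> complex list list" where
  "ctr xs = map (\<lambda>j. map (\<lambda>r. cnj (r!j)) xs) [0,1,2,3]"

lemma M_dagger: assumes "ok4 xs" shows "dagger (M xs) = M (ctr xs)"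
proof -
  have o: "ok4 (ctr xs)" using assms by (auto simp: ok4_def ctr_def)
  show ?thesis
  proof (rule eq_matI)
    fix i j assume ij: "i < dim_row (M (ctr xs))" "j < dim_col (M (ctr xs))"
    hence i: "i < 4" and j: "j < 4" using M_carrier[OF o] by auto
    show "dagger (M xs) $$ (i,j) = M (ctr xs) $$ (i,j)"
      using i j M_carrier[OF assms] M_index[OF assms j i] M_index[OF o i j] assms
      unfolding dagger_def ctr_def ok4_def less4
      by (auto simp: numeral_eq_Suc)
  qed (use M_carrier[OF o] M_carrier[OF assms] in \<open>auto simp: dagger_def\<close>)
qed

lemma M_uminus: assumes "ok4 xs" shows "- M xs = M (map (map uminus) xs)"
proof -
  have o: "ok4 (map (map uminus) xs)" using assms by (auto simp: ok4_def)
  show ?thesis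
    by (rule eq_matI) (use M_carrier[OF o] M_carrier[OF assms] assms o in \<open>auto simp: M_index ok4_def\<close>)
qed

lemma M_smult: assumes "ok4 xs" shows "c \<cdot>\<^sub>m M xs = M (map (map ((*) c)) xs)"
proof -
  have o: "ok4 (map (map ((*) c)) xs)" using assms by (auto simp: ok4_def)
  show ?thesis
    by (rule eq_matI) (use M_carrier[OF o] M_carrier[OF assms] assms o in \<open>auto simp: M_index ok4_def\<close>)
qed

lemma eq4I: assumes "A \<in> carrier_mat 4 4" "B \<in> carrier_mat 4 4"
  "\<forall>i\<in>{0,1,2,3}. \<forall>j\<in>{0,1,2,3}. A $$ (i,j) = B $$ (i,j)" shows "A = B"
  by (rule eq_matI) (use assms in \<open>auto simp: less4\<close>)

definition "I4 = [[1,0,0,0],[0,1,0,0],[0,0,1,0],[0,0,0,1::complex]]"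
definition "La = [[0,0,-\<i>,0],[0,0,0,-\<i>],[\<i>,0,0,0],[0,\<i>,0,0]]"
definition "Lb = [[0,0,-1,0],[0,0,0,1],[-1,0,0,0],[0,1,0,0::complex]]"
definition "Lc = [[0,0,0,\<i>],[0,0,-\<i>,0],[0,\<i>,0,0],[-\<i>,0,0,0]]"

lemma M_one: "1\<^sub>m 4 = M I4"
  by (rule eq4I) (auto simp: M_def mat_of_rows_list_def I4_def)

lemma kron_eval: "i < 4 \<Longrightarrow> j < 4 \<Longrightarrow> kron2 A B $$ (i,j) = A $$ (i div 2, j div 2) * B $$ (i mod 2, j mod 2)"
  by (simp add: kron2_def)

lemma Ua: "Umat Ta = M La"
  by (rule eq4I) (auto simp: Umat_def kron_eval M_def mat_of_rows_list_def La_def less4 pauli_y_def kron2_def)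
lemma Ub: "Umat Tb = M Lb"
  by (rule eq4I) (auto simp: Umat_def kron_eval M_def mat_of_rows_list_def Lb_def less4 pauli_x_def pauli_z_def kron2_def)
lemma Uc: "Umat Tc = M Lc"
  by (rule eq4I) (auto simp: Umat_def kron_eval M_def mat_of_rows_list_def Lc_def less4 pauli_x_def pauli_y_def kron2_def)

lemmas Mrules = M_mult M_dagger M_uminus M_smult
lemmas Mdefs = mmul_def dot4_def col4_def ctr_def ok4_def I4_def La_def Lb_def Lc_def

lemma less6: "(k::nat) < 6 \<longleftrightarrow> k = 0 \<or> k = Suc 0 \<or> k = Suc (Suc 0) \<or> k = Suc (Suc (Suc 0)) \<or> k = Suc (Suc (Suc (Suc 0))) \<or> k = Suc (Suc (Suc (Suc (Suc 0))))" by auto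
lemma rotS: "rotate (Suc n) xs = rotate n (rotate1 xs)" by (simp add: rotate_def funpow_swap1)
lemma M_neg_one: "- 1\<^sub>m 4 = M [[-1,0,0,0],[0,-1,0,0],[0,0,-1,0],[0,0,0,-1]]"
  by (simp add: M_one M_uminus Mdefs)

lemma partI: "k < 6 \<Longrightarrow> loop_prod (rotate k (hex R)) = - 1\<^sub>m 4 \<and>
            loop_prod (rotate k (rev (hex R))) = - 1\<^sub>m 4"
  unfolding M_neg_one loop_prod_def M_one
  apply (cases R)
  apply (simp only: less6)
  apply (elim disjE)
  apply (simp_all add: rotS hex_def link_def vadd_def vsub_def a1_def a2_def
       Ua Ub Uc M_one Mrules Mdefs)
  done

definition gA :: "int \<times> int \<Rightarrow> complex mat" where
  "gA R = (if even (fst R) then 1\<^sub>m 4 else Umat Tc * Umat Ta) * (if even (snd R) then 1\<^sub>m 4 else Umat Tc * Umat Tb)"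

fun gg :: "site \<Rightarrow> complex mat" where
  "gg (SA R) = gA R"
| "gg (SB R) = gA R * Umat Tc"

definition eta :: "site \<Rightarrow> site \<Rightarrow> real" where
  "eta i j = Re ((gg i * link i j * dagger (gg j)) $$ (0,0))"

lemma gA_eval: "gA (a,b) = (if even a then M I4 else M (mmul Lc La)) * (if even b then M I4 else M (mmul Lc Lb))"
  by (simp add: gA_def M_one Ua Ub Uc M_mult Mdefs)

lemma unit_gg: "unitary4 (gg j)"
  apply (cases j)
  subgoal for R by (cases R) (auto simp: unitary4_def gA_eval M_one Uc Mrules Mdefs M_carrier)
  subgoal for R by (cases R) (auto simp: unitary4_def gA_eval M_one Uc Mrules Mdefs M_carrier)
  done

lemma smult_one4: "complex_of_real r \<cdot>\<^sub>m 1\<^sub>m 4 = M [[of_real r,0,0,0],[0,of_real r,0,0],[0,0,of_real r,0],[0,0,0,of_real r]]"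
  by (simp add: M_one M_smult Mdefs)

lemma edge_ok:
  assumes "k < 6"
  shows "gg (hex R ! k) * link (hex R ! k) (hex R ! ((k+1) mod 6)) * dagger (gg (hex R ! ((k+1) mod 6)))
           = complex_of_real (eta (hex R ! k) (hex R ! ((k+1) mod 6))) \<cdot>\<^sub>m 1\<^sub>m 4 \<and>
         gg (hex R ! ((k+1) mod 6)) * link (hex R ! ((k+1) mod 6)) (hex R ! k) * dagger (gg (hex R ! k))
           = complex_of_real (eta (hex R ! k) (hex R ! ((k+1) mod 6))) \<cdot>\<^sub>m 1\<^sub>m 4 \<and>
         eta (hex R ! ((k+1) mod 6)) (hex R ! k) = eta (hex R ! k) (hex R ! ((k+1) mod 6)) \<and>
         eta (hex R ! k) (hex R ! ((k+1) mod 6)) \<in> {1, -1}"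
  using assms unfolding smult_one4 eta_def
  apply (cases R)
  apply (simp only: less6)
  apply (elim disjE; cases "even (fst R)"; cases "even (snd R)")
  apply (simp_all add: hex_def link_def vadd_def vsub_def a1_def a2_def gA_eval
       Ua Ub Uc Mrules Mdefs M_index)
  done

lemma lt6: "{..<6::nat} = {0,1,2,3,4,5}" by auto

lemma hex_prod: "(\<Prod>k<6. eta (hex R ! k) (hex R ! ((k + 1) mod 6))) = -1"
  unfolding lt6 eta_def
  apply (cases R)
  apply (cases "even (fst R)"; cases "even (snd R)")
  apply (simp_all add: hex_def link_def vadd_def vsub_def a1_def a2_def gA_eval
       Ua Ub Uc Mrules Mdefs M_index)
  done

theorem mainTheorem3:
  shows "(\<forall>R k. k < 6 \<longrightarrow>
            loop_prod (rotate k (hex R)) = - 1\<^sub>m 4 \<and>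
            loop_prod (rotate k (rev (hex R))) = - 1\<^sub>m 4)
       \<and> (\<forall>\<Lambda> :: (int \<times> int) set.
            finite \<Lambda> \<and> cycle_space_generated_by_hexagons \<Lambda> \<and>
            (\<exists>vs. hamiltonian_path \<Lambda> vs) \<longrightarrow>
            (\<exists>(g :: site \<Rightarrow> complex mat) (\<eta> :: site \<Rightarrow> site \<Rightarrow> real).
               (\<forall>j \<in> flake_sites \<Lambda>. unitary4 (g j)) \<and>
               (\<forall>i j. {i, j} \<in> flake_edges \<Lambda> \<longrightarrow>
                   \<eta> i j \<in> {1, -1} \<and> \<eta> i j = \<eta> j i \<and>
                   g i * link i j * dagger (g j) = complex_of_real (\<eta> i j) \<cdot>\<^sub>m 1\<^sub>m 4) \<and>
               (\<forall>R \<in> \<Lambda>. (\<Prod>k<6. \<eta> (hex R ! k) (hex R ! ((k + 1) mod 6))) = -1)))"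
proof (intro conjI allI impI)
  fix R k assume "(k::nat) < 6"
  then show "loop_prod (rotate k (hex R)) = - 1\<^sub>m 4" "loop_prod (rotate k (rev (hex R))) = - 1\<^sub>m 4"
    using partI by auto
next
  fix \<Lambda> :: "(int \<times> int) set"
  have E: "eta i j \<in> {1, -1} \<and> eta i j = eta j i \<and>
           gg i * link i j * dagger (gg j) = complex_of_real (eta i j) \<cdot>\<^sub>m 1\<^sub>m 4"
    if "{i, j} \<in> flake_edges \<Lambda>" for i j
  proof -
    from that obtain R k where k: "k < 6" and e: "{i, j} = {hex R ! k, hex R ! ((k + 1) mod 6)}"
      unfolding flake_edges_def hex_edges_def by blast
    note ok = edge_ok[OF k, of R]
    from e have "(i = hex R ! k \<and> j = hex R ! ((k + 1) mod 6)) \<or> (j = hex R ! k \<and> i = hex R ! ((k + 1) mod 6))"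
      by (auto simp: doubleton_eq_iff)
    then show ?thesis using ok by auto
  qed
  show "\<exists>(g :: site \<Rightarrow> complex mat) (\<eta> :: site \<Rightarrow> site \<Rightarrow> real).
               (\<forall>j \<in> flake_sites \<Lambda>. unitary4 (g j)) \<and>
               (\<forall>i j. {i, j} \<in> flake_edges \<Lambda> \<longrightarrow>
                   \<eta> i j \<in> {1, -1} \<and> \<eta> i j = \<eta> j i \<and>
                   g i * link i j * dagger (g j) = complex_of_real (\<eta> i j) \<cdot>\<^sub>m 1\<^sub>m 4) \<and>
               (\<forall>R \<in> \<Lambda>. (\<Prod>k<6. \<eta> (hex R ! k) (hex R ! ((k + 1) mod 6))) = -1)"
    by (rule exI[of _ gg], rule exI[of _ eta]) (use E unit_gg hex_prod in blast)
qed

end
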